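(* Let $N\ge3$ and define $s(r)=\left((N-2)\int_r^\infty(\sinh\sigma)^{1-N}d\sigma\right)^{-\frac{1}{N-2}}$ for $r>0$ (so that $\frac{ds}{s^{N-1}}=\frac{dr}{(\sinh r)^{N-1}}$). Then there exist positive constants $c_1,c_2$ such that $$s(r)=c_1e^{\frac{N-1}{N-2}r}-c_2e^{-\frac{N-3}{N-2}r}+o\!\left(e^{-\frac{N-3}{N-2}r}\right)\quad\text{as }r\to\infty.$$ *)

theory Defs
  imports "HOL-Analysis.Analysis" "HOL-Library.Landau_Symbols"
begin

definition s_fun :: "nat \<Rightarrow> real \<Rightarrow> real" where
  "s_fun N r = ((real N - 2) * integral {r..} (\<lambda>\<sigma>. 1 / (sinh \<sigma>) ^ (N - 1)))
                 powr (- 1 / (real N - 2))"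

end

theory Submission imports Defs "HOL-Real_Asymp.Real_Asymp" begin

lemma key1:
  fixes y :: real and m :: nat assumes "0 \<le> y" "y \<le> 1"
  shows "(1 + real m * y) * (1 - y)^m \<le> 1"
proof -
  have "1 + real m * y \<le> (1+y)^m" using Bernoulli_inequality[of y m] assms by simp
  hence "(1 + real m * y) * (1 - y)^m \<le> (1+y)^m * (1-y)^m"
    by (rule mult_right_mono) (use assms in simp)
  also have "\<dots> = (1 - y^2)^m" by (simp add: power_mult_distrib[symmetric] algebra_simps power2_eq_square)
  also have "\<dots> \<le> 1" using assms by (intro power_le_one) (auto simp: power2_eq_square mult_le_one)
  finally show ?thesis .
qed

lemma key2:
  fixes y :: real and m :: nat assumes "0 \<le> y" "y \<le> 1/2"
  shows "1 \<le> (1 - y)^m * (1 + real m * y + real m^2 * 2^m * y^2)"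
proof -
  have b: "1 - real m * y \<le> (1-y)^m" using Bernoulli_inequality[of "-y" m] assms by simp
  have h: "(1/2::real)^m \<le> (1-y)^m" using assms by (intro power_mono) auto
  have A: "(1 - real m * y) * (1 + real m * y) \<le> (1-y)^m * (1 + real m * y)"
    by (rule mult_right_mono[OF b]) (use assms in simp)
  have B0: "(1/2::real)^m * (real m^2 * 2^m * y^2) \<le> (1-y)^m * (real m^2 * 2^m * y^2)"
    by (rule mult_right_mono[OF h]) (use assms in simp)
  have B1: "(1/2::real)^m * (real m^2 * 2^m * y^2) = real m^2 * y^2"
    by (simp add: power_divide)
  have C: "(1 - real m * y) * (1 + real m * y) = 1 - real m^2 * y^2"
    by (simp add: algebra_simps power2_eq_square)
  have D: "(1 - y)^m * (1 + real m * y + real m^2 * 2^m * y^2) = (1-y)^m * (1 + real m * y) + (1-y)^m * (real m^2 * 2^m * y^2)"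
    by (simp add: algebra_simps)
  show ?thesis unfolding D using A B0 B1 C by linarith
qed

lemma sinh_bounds:
  fixes m :: nat and \<sigma> :: real assumes "\<sigma> \<ge> 1"
  shows "2^m*exp(-real m*\<sigma>) + 2^m*real m*exp(-(real m+2)*\<sigma>) \<le> 1/(sinh \<sigma>)^m"
    and "1/(sinh \<sigma>)^m \<le> 2^m*exp(-real m*\<sigma>) + 2^m*real m*exp(-(real m+2)*\<sigma>)
                          + real m^2*4^m*exp(-(real m+4)*\<sigma>)"
proof -
  define e where "e = exp (-\<sigma>)"
  have e0: "e > 0" by (simp add: e_def)
  have "e^2 = exp(-2*\<sigma>)" by (simp add: e_def power2_eq_square flip: exp_add)
  also have "\<dots> \<le> exp (-2)" using assms by simp
  also have "exp (-2) \<le> (1/2::real)"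
  proof -
    have "3 \<le> exp (2::real)" using exp_ge_add_one_self[of 2] by simp
    thus ?thesis by (simp add: exp_minus field_simps)
  qed
  finally have e2: "e^2 \<le> 1/2" .
  have ee: "exp \<sigma> = 1/e" by (simp add: e_def exp_minus inverse_eq_divide)
  have sh: "sinh \<sigma> = (1 - e^2) / (2*e)"
    unfolding sinh_def ee e_def[symmetric] using e0 by (simp add: field_simps power2_eq_square)
  have E: "exp (- real n * \<sigma>) = e^n" for n :: nat
    unfolding e_def by (simp flip: exp_of_nat_mult)
  have E2: "exp (-(real m+2)*\<sigma>) = e^(m+2)"
  proof -
    have "exp (-(real m+2)*\<sigma>) = exp (- real (m+2) * \<sigma>)" by simp
    also have "\<dots> = e^(m+2)" by (rule E)
    finally show ?thesis .
  qed
  have E4: "exp (-(real m+4)*\<sigma>) = e^(m+4)"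
  proof -
    have "exp (-(real m+4)*\<sigma>) = exp (- real (m+4) * \<sigma>)" by simp
    also have "\<dots> = e^(m+4)" by (rule E)
    finally show ?thesis .
  qed
  have y1: "0 < 1 - e^2" using e2 by simp
  have F: "1/(sinh \<sigma>)^m = (2*e)^m / (1-e^2)^m" unfolding sh by (simp add: power_divide)
  have pos: "(0::real) < (2*e)^m" using e0 by simp
  have ypos: "(0::real) < (1-e^2)^m" using y1 by simp
  have "(1 + real m * e^2) * (1 - e^2)^m \<le> 1" using key1[of "e^2" m] e2 by simp
  hence "(1 + real m * e^2) \<le> 1 / (1 - e^2)^m" using ypos by (simp add: field_simps)
  hence "(2*e)^m * (1 + real m * e^2) \<le> (2*e)^m * (1 / (1 - e^2)^m)"
    by (rule mult_left_mono) (use pos in auto)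
  thus "2^m*exp(-real m*\<sigma>) + 2^m*real m*exp(-(real m+2)*\<sigma>) \<le> 1/(sinh \<sigma>)^m"
    unfolding F E E2 by (simp add: algebra_simps power_mult_distrib power_add power2_eq_square)
  have "1 \<le> (1 - e^2)^m * (1 + real m * e^2 + real m^2 * 2^m * (e^2)^2)" using key2[of "e^2" m] e2 by simp
  hence "1 / (1 - e^2)^m \<le> (1 + real m * e^2 + real m^2 * 2^m * (e^2)^2)" using ypos by (simp add: field_simps)
  hence "(2*e)^m * (1 / (1 - e^2)^m) \<le> (2*e)^m * (1 + real m * e^2 + real m^2 * 2^m * (e^2)^2)"
    by (rule mult_left_mono) (use pos in auto)
  moreover have "(4::real)^m = 2^m*2^m" by (simp flip: power_mult_distrib)
  ultimately show "1/(sinh \<sigma>)^m \<le> 2^m*exp(-real m*\<sigma>) + 2^m*real m*exp(-(real m+2)*\<sigma>)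
                          + real m^2*4^m*exp(-(real m+4)*\<sigma>)"
    unfolding F E E2 E4 by (simp add: algebra_simps power_mult_distrib power_add power2_eq_square power4_eq_xxxx)
qed


lemma integral_bounds:
  fixes m :: nat and r :: real assumes m: "m \<ge> 1" and r: "r \<ge> 1"
  defines "G \<equiv> 2^m*exp(-real m*r)/real m + 2^m*real m*exp(-(real m+2)*r)/(real m+2)"
    and "H \<equiv> real m^2*4^m*exp(-(real m+4)*r)/(real m+4)"
  shows "G \<le> integral {r..} (\<lambda>\<sigma>. 1/(sinh \<sigma>)^m)"
    and "integral {r..} (\<lambda>\<sigma>. 1/(sinh \<sigma>)^m) \<le> G + H"
proof -
  define g where "g = (\<lambda>\<sigma>::real. 2^m*exp(-real m*\<sigma>) + 2^m*real m*exp(-(real m+2)*\<sigma>))"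
  define h where "h = (\<lambda>\<sigma>::real. real m^2*4^m*exp(-(real m+4)*\<sigma>))"
  define f where "f = (\<lambda>\<sigma>::real. 1/(sinh \<sigma>)^m)"
  have mpos: "real m > 0" using m by simp
  have i1: "((\<lambda>x. exp(-real m*x)) has_integral exp(-real m*r)/real m) {r..}"
    by (rule has_integral_exp_minus_to_infinity) (use mpos in auto)
  have i2: "((\<lambda>x. exp(-(real m+2)*x)) has_integral exp(-(real m+2)*r)/(real m+2)) {r..}"
    by (rule has_integral_exp_minus_to_infinity) (use mpos in auto)
  have i4: "((\<lambda>x. exp(-(real m+4)*x)) has_integral exp(-(real m+4)*r)/(real m+4)) {r..}"
    by (rule has_integral_exp_minus_to_infinity) (use mpos in auto)
  have gi: "(g has_integral G) {r..}"
    using has_integral_add[OF has_integral_mult_right[OF i1, of "2^m"] has_integral_mult_right[OF i2, of "2^m*real m"]]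
    unfolding g_def G_def by simp
  have hi: "(h has_integral H) {r..}"
    using has_integral_mult_right[OF i4, of "real m^2*4^m"]
    unfolding h_def H_def by simp
  have ghi: "((\<lambda>x. g x + h x) has_integral (G + H)) {r..}" by (intro has_integral_add gi hi)
  have lo: "g x \<le> f x" and up: "f x \<le> g x + h x" if "x \<in> {r..}" for x
    using sinh_bounds[of x m] that r unfolding f_def g_def h_def by auto
  have cont: "continuous_on {r..} f"
    unfolding f_def using r by (intro continuous_intros) auto
  have fint: "f integrable_on {r..}"
  proof (rule measurable_bounded_by_integrable_imp_integrable_real)
    show "f \<in> borel_measurable (lebesgue_on {r..})"
      by (rule continuous_imp_measurable_on_sets_lebesgue[OF cont]) simp
    show "(\<lambda>x. g x + h x) integrable_on {r..}" using ghi by blast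
    show "\<bar>f x\<bar> \<le> g x + h x" if "x \<in> {r..}" for x
    proof -
      have "f x \<ge> 0" using that r unfolding f_def by simp
      thus ?thesis using up[OF that] by simp
    qed
  qed simp
  show "G \<le> integral {r..} (\<lambda>\<sigma>. 1/(sinh \<sigma>)^m)"
    using has_integral_le[OF gi integrable_integral[OF fint] lo] unfolding f_def by simp
  show "integral {r..} (\<lambda>\<sigma>. 1/(sinh \<sigma>)^m) \<le> G + H"
    using has_integral_le[OF integrable_integral[OF fint] ghi up] unfolding f_def by simp
qed


lemma R_bigo: "p > (0::real) \<Longrightarrow> (\<lambda>x. (1+x) powr (-p) - (1 - p*x)) \<in> O[at_right 0](\<lambda>x::real. x^2)"
  by real_asymp

theorem lemma6p4:
  fixes N :: nat
  assumes "N \<ge> 3"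
  shows "\<exists>c1 c2 :: real. c1 > 0 \<and> c2 > 0 \<and>
    (\<lambda>r. s_fun N r - (c1 * exp ((real N - 1) / (real N - 2) * r)
                       - c2 * exp (- ((real N - 3) / (real N - 2)) * r)))
      \<in> o[at_top](\<lambda>r. exp (- ((real N - 3) / (real N - 2)) * r))"
proof -
  define m where "m = N - 1"
  define a where "a = real N - 1"
  define k where "k = real N - 2"
  define b where "b = (real N - 3) / (real N - 2)"
  have ma: "real m = a" using assms by (simp add: a_def m_def of_nat_diff)
  have m1: "m \<ge> 1" using assms by (simp add: m_def)
  have k1: "k \<ge> 1" using assms by (simp add: k_def)
  have a0: "a > 0" using assms by (simp add: a_def)
  have ak: "a = k + 1" by (simp add: a_def k_def)
  define I where "I = (\<lambda>r::real. integral {r..} (\<lambda>\<sigma>. 1/(sinh \<sigma>)^m))"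
  define G where "G = (\<lambda>r. 2^m*exp(-a*r)/a + 2^m*a*exp(-(a+2)*r)/(a+2))"
  define C where "C = a^2*4^m/(a+4)"
  define eps where "eps = (\<lambda>r. I r - G r)"
  have C0: "C \<ge> 0" using a0 by (simp add: C_def)
  have epsb: "eventually (\<lambda>r. 0 \<le> eps r \<and> eps r \<le> C*exp(-(a+4)*r)) at_top"
    using eventually_ge_at_top[of "1::real"]
  proof eventually_elim
    case (elim r)
    from integral_bounds[OF m1 elim] show ?case
      unfolding eps_def I_def G_def C_def ma by (auto simp: field_simps)
  qed
  define u where "u = (\<lambda>r. exp(a*r)*eps r)"
  have ub: "eventually (\<lambda>r. 0 \<le> u r \<and> u r \<le> C*exp(-4*r)) at_top"
    using epsb
  proof eventually_elim
    case (elim r)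
    have X: "exp(a*r) * (C*exp(-(a+4)*r)) = C*exp(-4*r)"
      by (simp add: algebra_simps flip: exp_add)
    have Y: "exp(a*r) * eps r \<le> exp(a*r) * (C*exp(-(a+4)*r))"
      using elim by (intro mult_left_mono) auto
    have "exp(a*r) * eps r \<le> C*exp(-4*r)" using X Y by linarith
    thus ?case using elim unfolding u_def by simp
  qed
  define K where "K = k*2^m/a"
  define \<alpha> where "\<alpha> = a^2/(a+2)"
  define t where "t = (\<lambda>r. \<alpha>*exp(-2*r) + (a/2^m)*u r)"
  have \<alpha>0: "\<alpha> > 0" using a0 by (simp add: \<alpha>_def)
  have K0: "K > 0" using a0 k1 by (simp add: K_def)
  define B where "B = \<alpha> + a/2^m*C"
  have tb: "eventually (\<lambda>r. 0 < t r \<and> t r \<le> B*exp(-2*r)) at_top"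
    using ub eventually_ge_at_top[of "0::real"]
  proof eventually_elim
    case (elim r)
    have "exp(-4*r) \<le> exp(-2*r)" using elim by simp
    hence "C*exp(-4*r) \<le> C*exp(-2*r)" using C0 by (intro mult_left_mono) auto
    hence "(a/2^m)*u r \<le> (a/2^m)*(C*exp(-2*r))" using elim a0
      by (intro mult_left_mono) auto
    moreover have "0 \<le> (a/2^m)*u r" using elim a0 by simp
    moreover have "0 < \<alpha>*exp(-2*r)" using \<alpha>0 by simp
    ultimately show ?case unfolding t_def B_def by (simp add: algebra_simps)
  qed
  have tlim0: "(t \<longlongrightarrow> 0) at_top"
  proof (rule tendsto_sandwich[of "\<lambda>_. 0" _ _ "\<lambda>r. B*exp(-2*r)"])
    show "eventually (\<lambda>r. 0 \<le> t r) at_top" using tb by eventually_elim auto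
    show "eventually (\<lambda>r. t r \<le> B*exp(-2*r)) at_top" using tb by eventually_elim auto
    show "((\<lambda>r. B*exp(-2*r)) \<longlongrightarrow> 0) at_top" by real_asymp
  qed simp
  have tlim: "filterlim t (at_right 0) at_top"
    by (rule tendsto_imp_filterlim_at_right[OF tlim0]) (use tb in \<open>eventually_elim, auto\<close>)
  have keyid: "k * I r = K*exp(-a*r)*(1 + t r)" for r
  proof -
    define e where "e = exp(-a*r)"
    define f where "f = exp(-2*r)"
    have e0: "e > 0" by (simp add: e_def)
    have e1: "exp(-(a+2)*r) = e*f" unfolding e_def f_def by (simp add: algebra_simps flip: exp_add)
    have e2: "exp(a*r) = 1/e" unfolding e_def by (simp add: exp_minus inverse_eq_divide)
    have "I r = G r + eps r" by (simp add: eps_def)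
    hence "k * I r = k*(2^m*e/a + 2^m*a*(e*f)/(a+2) + eps r)"
      unfolding G_def e1 by (simp add: e_def)
    also have "\<dots> = K*e*(1 + \<alpha>*f + a/2^m*(1/e*eps r))"
      proof -
      have nz: "a \<noteq> 0" "a + 2 \<noteq> 0" "(2::real)^m \<noteq> 0" "e \<noteq> 0" "a*a + a*2 \<noteq> 0" using a0 e0 by (auto, smt (verit) mult_pos_pos)
      have "K*e*(1 + \<alpha>*f + a/2^m*(1/e*eps r)) = K*e + (K*\<alpha>)*(e*f) + (K*a/2^m)*(e*(1/e))*eps r"
        by (simp add: algebra_simps)
      also have "K*\<alpha> = 2^m*a*k/(a+2)" unfolding K_def \<alpha>_def using nz by (simp add: field_simps power2_eq_square)
      also have "K*a/2^m = k" unfolding K_def using nz by simp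
      also have "e*(1/e) = 1" using nz by simp
      finally show ?thesis unfolding K_def by (simp add: algebra_simps)
    qed
    finally show ?thesis unfolding t_def u_def e2 by (simp add: e_def f_def)
  qed
  define p where "p = 1/k"
  have p0: "p > 0" using k1 by (simp add: p_def)
  define c1 where "c1 = K powr (-p)"
  define c2 where "c2 = c1*p*\<alpha>"
  have c10: "c1 > 0" using K0 by (simp add: c1_def)
  have c20: "c2 > 0" using c10 p0 \<alpha>0 by (simp add: c2_def)
  define R where "R = (\<lambda>x::real. (1+x) powr (-p) - (1 - p*x))"
  have sform: "s_fun N r = c1*(exp((real N - 1)/(real N - 2)*r)*(1+t r) powr (-p))" if "t r > 0" for r
  proof -
    have "s_fun N r = (k * I r) powr (-p)"
      unfolding s_fun_def I_def m_def k_def p_def by simp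
    also have "\<dots> = (K*exp(-a*r)*(1 + t r)) powr (-p)" by (simp add: keyid)
    also have "\<dots> = K powr (-p) * exp(-a*r) powr (-p) * (1 + t r) powr (-p)"
      using K0 that by (simp add: powr_mult)
    also have "exp(-a*r) powr (-p) = exp((real N - 1)/(real N - 2)*r)"
      unfolding powr_def using k1 by (simp add: p_def a_def k_def field_simps)
    finally show ?thesis by (simp add: c1_def)
  qed
  have Rt: "(\<lambda>r. R (t r)) \<in> O(\<lambda>r. (t r)^2)"
    unfolding R_def by (rule landau_o.big.compose[OF R_bigo[OF p0] tlim])
  have tO: "t \<in> O(\<lambda>r. exp(-2*r))"
    by (rule bigoI[where c=B]) (use tb in \<open>eventually_elim, auto\<close>)
  have t2: "(\<lambda>r. (t r)^2) \<in> O(\<lambda>r. exp(-4*r))"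
  proof -
    have "(\<lambda>r. (t r)^2) \<in> O(\<lambda>r. exp(-2*r)^2)" by (rule landau_o.big_power[OF tO])
    moreover have "(\<lambda>r. exp(-2*r)^2) = (\<lambda>r::real. exp(-4*r))"
      by (simp add: power2_eq_square flip: exp_add)
    ultimately show ?thesis by simp
  qed
  have RtO: "(\<lambda>r. R (t r)) \<in> O(\<lambda>r. exp(-4*r))" using landau_o.big_trans[OF Rt t2] .
  have uO: "u \<in> O(\<lambda>r. exp(-4*r))"
    by (rule bigoI[where c=C]) (use ub in \<open>eventually_elim, auto\<close>)
  define E where "E = (\<lambda>r::real. exp((real N - 1)/(real N - 2)*r))"
  have Eb: "E r * exp(-2*r) = exp(-b*r)" for r
  proof -
    have "(real N - 1)/(real N - 2)*r + -2*r = -b*r"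
      using assms by (simp add: b_def field_simps)
    thus ?thesis unfolding E_def by (simp flip: exp_add)
  qed
  have Deq: "eventually (\<lambda>r. s_fun N r - (c1 * exp ((real N - 1) / (real N - 2) * r)
                       - c2 * exp (- ((real N - 3) / (real N - 2)) * r))
       = c1*(E r*R (t r)) - (c1*p*(a/2^m))*(E r*u r)) at_top"
    using tb
  proof eventually_elim
    case (elim r)
    have "exp (- ((real N - 3) / (real N - 2)) * r) = E r * exp(-2*r)"
      using Eb[of r] by (simp add: b_def)
    thus ?case using sform[of r] elim unfolding R_def c2_def t_def
      by (simp add: algebra_simps E_def)
  qed
  have main: "(\<lambda>r. c1*(E r*R (t r)) - (c1*p*(a/2^m))*(E r*u r)) \<in> O(\<lambda>r. E r*exp(-4*r))"
  proof (rule sum_in_bigo(2))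
    show "(\<lambda>r. c1*(E r*R (t r))) \<in> O(\<lambda>r. E r*exp(-4*r))"
      using landau_o.big.mult_left[OF RtO, of E] by simp
    show "(\<lambda>r. (c1*p*(a/2^m))*(E r*u r)) \<in> O(\<lambda>r. E r*exp(-4*r))"
      using landau_o.big.mult_left[OF uO, of E] by simp
  qed
  have small: "(\<lambda>r. E r*exp(-4*r)) \<in> o(\<lambda>r. exp(-b*r))"
  proof -
    have eq: "E r*exp(-4*r) = exp(-2*r) * exp(-b*r)" for r
    proof -
      have "exp(-4*r) = exp(-2*r)*exp(-2*r)" by (simp flip: exp_add)
      hence "E r*exp(-4*r) = (E r * exp(-2*r))*exp(-2*r)" by (simp only: mult.assoc)
      thus ?thesis using Eb[of r] by (simp only: mult.commute)
    qed
    have "(\<lambda>r::real. exp(-2*r)) \<in> o(\<lambda>_. 1)" by real_asymp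
    from landau_o.small_big_mult[OF this landau_o.big_refl[of "\<lambda>r. exp(-b*r)"]]
    show ?thesis unfolding eq by simp
  qed
  have fin: "(\<lambda>r. c1*(E r*R (t r)) - (c1*p*(a/2^m))*(E r*u r)) \<in> o(\<lambda>r. exp(-b*r))"
    using landau_o.big_small_trans[OF main small] .
  have "(\<lambda>r. s_fun N r - (c1 * exp ((real N - 1) / (real N - 2) * r)
                       - c2 * exp (- ((real N - 3) / (real N - 2)) * r)))
      \<in> o[at_top](\<lambda>r. exp (- ((real N - 3) / (real N - 2)) * r))"
    using landau_o.small.in_cong[OF Deq] fin by (simp add: b_def)
  thus ?thesis using c10 c20 by blast
qed

end
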